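(* Let $x_1,x_2,x_3>0$, $\gamma,\delta>0$ with $\gamma\ne1\ne\delta$, and let $$\mathbf{Q}=\begin{pmatrix}1&\delta x_1&x_2&x_3\\ 1/(\delta x_1)&1&x_2/x_1&x_3/x_1\\ 1/x_2&x_1/x_2&1&\gamma x_3/x_2\\ 1/x_3&x_1/x_3&x_2/(\gamma x_3)&1\end{pmatrix}$$ with principal right eigenvector $\mathbf{w}^{EM}$. Then $\delta>1$ iff $w_1^{EM}/w_2^{EM}<\delta x_1$, and $\delta<1$ iff $w_1^{EM}/w_2^{EM}>\delta x_1$.
   Context: The principal right eigenvector is the positive (Perron) eigenvector belonging to the largest eigenvalue. *)

theory Defs
  imports "HOL-Analysis.Analysis"
begin

definition cmat_eigenvalue :: "real^'n^'n \<Rightarrow> complex \<Rightarrow> bool" where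
  "cmat_eigenvalue A \<mu> \<longleftrightarrow>
     (\<exists>v::complex^'n. v \<noteq> 0 \<and> (\<chi> i j. complex_of_real (A$i$j)) *v v = \<mu> *s v)"

definition principal_right_eigenvector :: "real^'n^'n \<Rightarrow> real^'n \<Rightarrow> bool" where
  "principal_right_eigenvector A w \<longleftrightarrow>
     (\<forall>i. w$i > 0) \<and>
     (\<exists>l::real. A *v w = l *s w \<and> (\<forall>\<mu>. cmat_eigenvalue A \<mu> \<longrightarrow> cmod \<mu> \<le> l))"

definition Qmat :: "real \<Rightarrow> real \<Rightarrow> real \<Rightarrow> real \<Rightarrow> real \<Rightarrow> real^4^4" where
  "Qmat x1 x2 x3 \<gamma> \<delta> = vector [
     vector [1, \<delta> * x1, x2, x3],
     vector [1 / (\<delta> * x1), 1, x2 / x1, x3 / x1],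
     vector [1 / x2, x1 / x2, 1, \<gamma> * x3 / x2],
     vector [1 / x3, x1 / x3, x2 / (\<gamma> * x3), 1]]"

lemma Qmat_entries_sanity:
  "Qmat x1 x2 x3 \<gamma> \<delta> $ 1 $ 2 = \<delta> * x1"
  "Qmat x1 x2 x3 \<gamma> \<delta> $ 3 $ 4 = \<gamma> * x3 / x2"
  "Qmat x1 x2 x3 \<gamma> \<delta> $ 4 $ 3 = x2 / (\<gamma> * x3)"
  by (simp_all add: Qmat_def vector_def)

end

theory Submission
  imports Defs
begin

theorem mainTheorem11:
  fixes x1 x2 x3 \<gamma> \<delta> :: real and w :: "real^4"
  assumes "x1 > 0" "x2 > 0" "x3 > 0" "\<gamma> > 0" "\<delta> > 0" "\<gamma> \<noteq> 1" "\<delta> \<noteq> 1"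
    and "principal_right_eigenvector (Qmat x1 x2 x3 \<gamma> \<delta>) w"
  shows "(\<delta> > 1 \<longleftrightarrow> w$1 / w$2 < \<delta> * x1) \<and> (\<delta> < 1 \<longleftrightarrow> w$1 / w$2 > \<delta> * x1)"
proof -
  from assms(8) obtain l where pos: "\<And>i. w$i > 0" and ev: "Qmat x1 x2 x3 \<gamma> \<delta> *v w = l *s w"
    unfolding principal_right_eigenvector_def by blast
  have r1: "w$1 + \<delta>*x1*w$2 + x2*w$3 + x3*w$4 = l * w$1"
    using arg_cong[OF ev, of "\<lambda>v. v$1"]
    by (simp add: Qmat_def matrix_vector_mult_def vector_def sum_4)
  have r2: "w$1/(\<delta>*x1) + w$2 + x2/x1*w$3 + x3/x1*w$4 = l * w$2"
    using arg_cong[OF ev, of "\<lambda>v. v$2"]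
    by (simp add: Qmat_def matrix_vector_mult_def vector_def sum_4)
  have p1: "w$1>0" "w$2>0" "w$3>0" "w$4>0" using pos by auto
  have T: "x2*w$3 + x3*w$4 > 0" using p1 assms by (simp add: add_pos_pos)
  have lp: "l > 0"
  proof -
    have "l * w$1 > 0" using r1[symmetric] p1 assms T by (simp add: add_pos_pos)
    thus ?thesis using p1 by (simp add: zero_less_mult_iff)
  qed
  have r2': "w$1 + \<delta>*x1*w$2 + \<delta>*(x2*w$3 + x3*w$4) = l*\<delta>*x1*w$2"
  proof -
    have "\<delta>*x1*(w$1/(\<delta>*x1) + w$2 + x2/x1*w$3 + x3/x1*w$4) = \<delta>*x1*(l*w$2)" using r2 by simp
    moreover have "\<delta>*x1*(w$1/(\<delta>*x1) + w$2 + x2/x1*w$3 + x3/x1*w$4) = w$1 + \<delta>*x1*w$2 + \<delta>*(x2*w$3 + x3*w$4)"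
      using assms(1,5) by (simp add: distrib_left distrib_right)
    ultimately show ?thesis by (simp add: algebra_simps)
  qed
  have key: "l*(w$1 - \<delta>*x1*w$2) = (1-\<delta>)*(x2*w$3 + x3*w$4)"
    using r1 r2' by (simp add: algebra_simps)
  have A: "w$1/w$2 < \<delta>*x1 \<longleftrightarrow> w$1 - \<delta>*x1*w$2 < 0" using p1 by (simp add: divide_less_eq)
  have B: "w$1/w$2 > \<delta>*x1 \<longleftrightarrow> w$1 - \<delta>*x1*w$2 > 0" using p1 by (simp add: less_divide_eq)
  have C: "w$1 - \<delta>*x1*w$2 < 0 \<longleftrightarrow> (1-\<delta>) < 0"
    by (metis key lp T mult_less_0_iff mult_pos_pos not_less_iff_gr_or_eq zero_less_mult_iff)
  have D: "w$1 - \<delta>*x1*w$2 > 0 \<longleftrightarrow> (1-\<delta>) > 0"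
    by (metis key lp T zero_less_mult_iff not_less_iff_gr_or_eq mult_pos_pos)
  show ?thesis using A B C D by auto
qed

end
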